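(* Let $\mathbf L\in\mathbb R^{n\times n}$ be positive semidefinite, $\mathcal D,\mathbf W$ a dictionary with positive weights, $\alpha>0$, $r\geq 1$, and let $l_i$, $\widehat{\mathbf L}$, $\tilde s$ be as in the context; assume $l_i>0$ for all $i\in[n]$ and set $\tilde d=\sum_{i=1}^n l_i$. Let $t\sim\mathrm{Poisson}(re^{1/r}\tilde d)$ and conditionally on $t$ let $\sigma=(\sigma_1,\dots,\sigma_t)$ be i.i.d. with $\Pr(\sigma_j=i)=l_i/\tilde d$; define $[\widetilde{\mathbf L}_\sigma]_{ab}=\frac{\mathbf L_{\sigma_a\sigma_b}}{r\sqrt{l_{\sigma_a}l_{\sigma_b}}}$. Then $$\mathbb E_{t,\sigma}\!\left[\frac{e^{\tilde s}\det(\mathbf I+\alpha\widetilde{\mathbf L}_\sigma)}{e^{t/r}\det(\mathbf I+\alpha\widehat{\mathbf L})}\right]=\exp\big(\tilde s+r\tilde d-re^{1/r}\tilde d\big)\,\frac{\det(\mathbf I+\alpha\mathbf L)}{\det(\mathbf I+\alpha\widehat{\mathbf L})}.$$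
   Context: A dictionary is a sequence $\mathcal D=(\mathcal D_1,\dots,\mathcal D_m)$ of elements of $[n]=\{1,\dots,n\}$, with a diagonal matrix $\mathbf W\in\mathbb R^{m\times m}$ of strictly positive weights. For index sequences $A,B$, $\mathbf L_{A,B}$ denotes the submatrix with rows indexed by $A$ and columns by $B$ (with repetitions allowed). The approximate marginals are $$l_i=\alpha\Big(\mathbf L_{ii}-\alpha\,\mathbf L_{\{i\},\mathcal D}\big(\alpha\mathbf L_{\mathcal D,\mathcal D}+\mathbf W^{-1}\big)^{-1}\mathbf L_{\mathcal D,\{i\}}\Big),\qquad i\in[n].$$ Further, $\widehat{\mathbf L}=\mathbf W^{1/2}\mathbf L_{\mathcal D,\mathcal D}\mathbf W^{1/2}\in\mathbb R^{m\times m}$ and $\tilde s=d_{\mathrm{eff}}(\alpha\widehat{\mathbf L})=\mathrm{tr}\big(\alpha\widehat{\mathbf L}(\alpha\widehat{\mathbf L}+\mathbf I)^{-1}\big)$. The determinant of a $0\times0$ matrix is $1$. *)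

theory Defs
  imports "Jordan_Normal_Form.Gauss_Jordan_Elimination" "Jordan_Normal_Form.Determinant"
          "HOL-Probability.Probability_Mass_Function"
begin

text \<open>Matrices are JNF matrices (type real mat) with explicit dimensions; indices are 0-based,
  so [n] is rendered as {0..<n}.\<close>

definition submat_idx :: "real mat \<Rightarrow> nat list \<Rightarrow> nat list \<Rightarrow> real mat" where
  "submat_idx L A B = Matrix.mat (length A) (length B) (\<lambda>(i, j). L $$ (A ! i, B ! j))"

definition psd_mat :: "nat \<Rightarrow> real mat \<Rightarrow> bool" where
  "psd_mat n L \<longleftrightarrow> L \<in> carrier_mat n n \<and> transpose_mat L = L \<and>
     (\<forall>x \<in> carrier_vec n. 0 \<le> scalar_prod x (L *\<^sub>v x))"

definition diag_list :: "real list \<Rightarrow> real mat" where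
  "diag_list w = Matrix.mat (length w) (length w) (\<lambda>(i, j). if i = j then w ! i else 0)"

definition W_mat :: "real list \<Rightarrow> real mat" where
  "W_mat w = diag_list w"

definition W_inv :: "real list \<Rightarrow> real mat" where
  "W_inv w = diag_list (map (\<lambda>x. 1 / x) w)"

definition W_sqrt :: "real list \<Rightarrow> real mat" where
  "W_sqrt w = diag_list (map sqrt w)"

definition mat_inv :: "real mat \<Rightarrow> real mat" where
  "mat_inv M = the (mat_inverse M)"

definition trace_mat :: "real mat \<Rightarrow> real" where
  "trace_mat M = (\<Sum>i < dim_row M. M $$ (i, i))"

definition approx_marginal :: "real mat \<Rightarrow> nat list \<Rightarrow> real list \<Rightarrow> real \<Rightarrow> nat \<Rightarrow> real" where
  "approx_marginal L D w \<alpha> i =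
     \<alpha> * (L $$ (i, i) - \<alpha> * (submat_idx L [i] D
        * mat_inv (\<alpha> \<cdot>\<^sub>m submat_idx L D D + W_inv w)
        * submat_idx L D [i]) $$ (0, 0))"

definition L_hat :: "real mat \<Rightarrow> nat list \<Rightarrow> real list \<Rightarrow> real mat" where
  "L_hat L D w = W_sqrt w * submat_idx L D D * W_sqrt w"

definition d_eff :: "real mat \<Rightarrow> real" where
  "d_eff M = trace_mat (M * mat_inv (M + 1\<^sub>m (dim_row M)))"

definition L_tilde :: "real mat \<Rightarrow> (nat \<Rightarrow> real) \<Rightarrow> real \<Rightarrow> nat list \<Rightarrow> real mat" where
  "L_tilde L l r \<sigma> = Matrix.mat (length \<sigma>) (length \<sigma>)
     (\<lambda>(a, b). L $$ (\<sigma> ! a, \<sigma> ! b) / (r * sqrt (l (\<sigma> ! a) * l (\<sigma> ! b))))"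

definition poisson_then_iid :: "real \<Rightarrow> 'a pmf \<Rightarrow> (nat \<times> 'a list) pmf" where
  "poisson_then_iid rate p =
     bind_pmf (poisson_pmf rate) (\<lambda>t. map_pmf (\<lambda>\<sigma>. (t, \<sigma>)) (replicate_pmf t p))"

end

theory Submission
  imports Defs
begin


definition cnt :: "nat list \<Rightarrow> nat \<Rightarrow> real" where
  "cnt \<sigma> i = (\<Sum>a<length \<sigma>. if \<sigma> ! a = i then 1 else 0)"

lemma cnt_nonneg: "0 \<le> cnt \<sigma> i"
  unfolding cnt_def by (intro sum_nonneg) auto

lemma cnt_Cons: "cnt (x # \<sigma>) i = (if x = i then 1 else 0) + cnt \<sigma> i"
  unfolding cnt_def by (simp only: length_Cons sum.lessThan_Suc_shift) simp

lemma prod_cnt_Cons: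
  assumes "finite S"
  shows "(\<Prod>i\<in>S. cnt (x # \<sigma>) i) = (\<Prod>i\<in>S. cnt \<sigma> i) + (if x \<in> S then (\<Prod>i\<in>S-{x}. cnt \<sigma> i) else 0)"
proof (cases "x \<in> S")
  case True
  have "(\<Prod>i\<in>S. cnt (x # \<sigma>) i) = cnt (x # \<sigma>) x * (\<Prod>i\<in>S-{x}. cnt (x # \<sigma>) i)"
    using True assms by (simp add: prod.remove)
  also have "(\<Prod>i\<in>S-{x}. cnt (x # \<sigma>) i) = (\<Prod>i\<in>S-{x}. cnt \<sigma> i)"
    by (intro prod.cong) (auto simp: cnt_Cons)
  also have "(\<Prod>i\<in>S. cnt \<sigma> i) = cnt \<sigma> x * (\<Prod>i\<in>S-{x}. cnt \<sigma> i)"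
    using True assms by (simp add: prod.remove)
  ultimately show ?thesis using True by (simp add: cnt_Cons algebra_simps)
next
  case False
  then show ?thesis by (auto intro!: prod.cong simp: cnt_Cons)
qed

lemma prod_cnt_nonneg: "0 \<le> (\<Prod>i\<in>S. cnt \<sigma> i)"
  by (intro prod_nonneg) (auto simp: cnt_nonneg)

lemma choose_fact_step:
  "real (t choose Suc k) * fact (Suc k) + real (Suc k) * (real (t choose k) * fact k)
   = real (Suc t choose Suc k) * fact (Suc k)"
proof -
  have "real (Suc t choose Suc k) = real (t choose Suc k) + real (t choose k)" by simp
  then show ?thesis by (simp add: algebra_simps)
qed

lemma moment_nn:
  assumes "finite S"
  shows "(\<integral>\<^sup>+\<sigma>. ennreal (\<Prod>i\<in>S. cnt \<sigma> i) \<partial>replicate_pmf t q)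
       = ennreal (real (t choose card S) * fact (card S) * (\<Prod>i\<in>S. pmf q i))"
  using assms
proof (induction t arbitrary: S)
  case 0
  show ?case
  proof (cases "S = {}")
    case False
    then have "card S > 0" using 0 by (simp add: card_gt_0_iff)
    then show ?thesis by (simp add: cnt_def zero_power binomial_eq_0)
  qed simp
next
  case (Suc t)
  define B where "B x = (if x \<in> S then real (t choose card (S - {x})) * fact (card (S-{x})) * (\<Prod>i\<in>S-{x}. pmf q i) else 0)" for x
  have B0: "0 \<le> B x" for x unfolding B_def by (auto intro!: prod_nonneg mult_nonneg_nonneg)
  have "(\<integral>\<^sup>+\<sigma>. ennreal (\<Prod>i\<in>S. cnt \<sigma> i) \<partial>replicate_pmf (Suc t) q)
     = (\<integral>\<^sup>+x. \<integral>\<^sup>+xs. ennreal (\<Prod>i\<in>S. cnt (x # xs) i) \<partial>replicate_pmf t q \<partial>q)"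
    by (simp add: nn_integral_return)
  also have "\<dots> = (\<integral>\<^sup>+x. \<integral>\<^sup>+xs. ennreal (\<Prod>i\<in>S. cnt xs i) + ennreal (if x \<in> S then (\<Prod>i\<in>S-{x}. cnt xs i) else 0) \<partial>replicate_pmf t q \<partial>q)"
    using Suc.prems by (simp add: prod_cnt_Cons ennreal_plus prod_cnt_nonneg)
  also have "\<dots> = (\<integral>\<^sup>+x. ennreal (real (t choose card S) * fact (card S) * (\<Prod>i\<in>S. pmf q i)) + ennreal (B x) \<partial>q)"
  proof (intro nn_integral_cong)
    fix x
    have "(\<integral>\<^sup>+xs. ennreal (\<Prod>i\<in>S. cnt xs i) + ennreal (if x \<in> S then (\<Prod>i\<in>S-{x}. cnt xs i) else 0) \<partial>replicate_pmf t q)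
      = (\<integral>\<^sup>+xs. ennreal (\<Prod>i\<in>S. cnt xs i) \<partial>replicate_pmf t q) + (\<integral>\<^sup>+xs. ennreal (if x \<in> S then (\<Prod>i\<in>S-{x}. cnt xs i) else 0) \<partial>replicate_pmf t q)"
      by (rule nn_integral_add) auto
    also have "(\<integral>\<^sup>+xs. ennreal (if x \<in> S then (\<Prod>i\<in>S-{x}. cnt xs i) else 0) \<partial>replicate_pmf t q) = ennreal (B x)"
      using Suc.IH[of "S - {x}"] Suc.prems by (cases "x \<in> S") (auto simp: B_def)
    finally show "(\<integral>\<^sup>+xs. ennreal (\<Prod>i\<in>S. cnt xs i) + ennreal (if x \<in> S then (\<Prod>i\<in>S-{x}. cnt xs i) else 0) \<partial>replicate_pmf t q)
      = ennreal (real (t choose card S) * fact (card S) * (\<Prod>i\<in>S. pmf q i)) + ennreal (B x)"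
      using Suc.IH[OF Suc.prems] by simp
  qed
  also have "\<dots> = ennreal (real (t choose card S) * fact (card S) * (\<Prod>i\<in>S. pmf q i)) + (\<integral>\<^sup>+x. ennreal (B x) \<partial>q)"
    by (subst nn_integral_add) auto
  also have "(\<integral>\<^sup>+x. ennreal (B x) \<partial>q) = (\<Sum>x\<in>S. ennreal (B x) * ennreal (pmf q x))"
    using Suc.prems by (intro nn_integral_measure_pmf_support) (auto simp: B_def)
  also have "\<dots> = ennreal (\<Sum>x\<in>S. B x * pmf q x)"
    by (simp add: ennreal_mult B0 sum_ennreal[symmetric] sum_nonneg)
  also have "(\<Sum>x\<in>S. B x * pmf q x) = (if S = {} then 0 else real (card S) * (real (t choose (card S - 1)) * fact (card S - 1) * (\<Prod>i\<in>S. pmf q i)))"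
  proof -
    have "(\<Sum>x\<in>S. B x * pmf q x) = (\<Sum>x\<in>S. real (t choose (card S - 1)) * fact (card S - 1) * (\<Prod>i\<in>S. pmf q i))"
    proof (intro sum.cong refl)
      fix x assume x: "x \<in> S"
      have "(\<Prod>i\<in>S. pmf q i) = pmf q x * (\<Prod>i\<in>S-{x}. pmf q i)"
        using x Suc.prems by (simp add: prod.remove)
      then show "B x * pmf q x = real (t choose (card S - 1)) * fact (card S - 1) * (\<Prod>i\<in>S. pmf q i)"
        using x Suc.prems by (simp add: B_def)
    qed
    then show ?thesis by simp
  qed
  finally show ?case
  proof -
    assume eq: "(\<integral>\<^sup>+\<sigma>. ennreal (\<Prod>i\<in>S. cnt \<sigma> i) \<partial>replicate_pmf (Suc t) q) =
      ennreal (real (t choose card S) * fact (card S) * (\<Prod>i\<in>S. pmf q i)) +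
      ennreal (if S = {} then 0 else real (card S) * (real (t choose (card S - 1)) * fact (card S - 1) * (\<Prod>i\<in>S. pmf q i)))"
    show ?thesis
    proof (cases "S = {}")
      case True then show ?thesis using eq by simp
    next
      case False
      then obtain k where k: "card S = Suc k" using Suc.prems by (cases "card S") auto
      have P0: "0 \<le> (\<Prod>i\<in>S. pmf q i)" by (intro prod_nonneg) auto
      have "ennreal (real (t choose card S) * fact (card S) * (\<Prod>i\<in>S. pmf q i)) +
            ennreal (real (card S) * (real (t choose (card S - 1)) * fact (card S - 1) * (\<Prod>i\<in>S. pmf q i)))
          = ennreal ((real (t choose Suc k) * fact (Suc k) + real (Suc k) * (real (t choose k) * fact k)) * (\<Prod>i\<in>S. pmf q i))"
        using P0 k by (subst ennreal_plus[symmetric]) (auto simp: algebra_simps)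
      also have "\<dots> = ennreal (real (Suc t choose card S) * fact (card S) * (\<Prod>i\<in>S. pmf q i))"
        unfolding choose_fact_step k ..
      finally show ?thesis using eq False by simp
    qed
  qed
qed



lemma series_moment:
  fixes lam mu r P :: real and k :: nat
  assumes "mu = lam * exp (-1/r)"
  shows "(\<lambda>t. (lam ^ t / fact t * exp (- lam)) * (exp (- real t / r) * (real (t choose k) * fact k * P)))
         sums (exp (mu - lam) * mu ^ k * P)"
proof -
  let ?f = "\<lambda>t. (lam ^ t / fact t * exp (- lam)) * (exp (- real t / r) * (real (t choose k) * fact k * P))"
  have e: "exp (- real t / r) = exp (-1/r) ^ t" for t
    by (subst exp_of_nat_mult[symmetric]) (simp add: field_simps)
  have sh: "?f (i + k) = (exp (- lam) * mu ^ k * P) * (mu ^ i / fact i)" for i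
  proof -
    have bf: "fact k * fact i * real ((i + k) choose k) = fact (i + k)"
      using binomial_fact_lemma[of k "i + k"] by (metis add_diff_cancel_right' le_add2 of_nat_fact of_nat_mult)
    have "?f (i + k) = exp (-lam) * P * (lam * exp (-1/r)) ^ (i + k) * (real ((i + k) choose k) * fact k / fact (i + k))"
      unfolding e by (simp add: power_mult_distrib field_simps)
    also have "real ((i + k) choose k) * fact k / fact (i + k) = 1 / fact i"
      using bf by (simp add: field_simps)
    finally show ?thesis using assms by (simp add: power_add field_simps)
  qed
  have z: "?f i = 0" if "i < k" for i using that by (simp add: binomial_eq_0)
  have "(\<lambda>i. mu ^ i / fact i) sums exp mu"
    using exp_converges[of mu] by (simp add: divide_inverse mult.commute)
  then have "(\<lambda>i. (exp (- lam) * mu ^ k * P) * (mu ^ i / fact i)) sums ((exp (- lam) * mu ^ k * P) * exp mu)"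
    by (rule sums_mult)
  then have "(\<lambda>i. ?f (i + k)) sums ((exp (- lam) * mu ^ k * P) * exp mu)"
    by (simp only: sh)
  then have "?f sums ((exp (- lam) * mu ^ k * P) * exp mu)"
    using sums_zero_iff_shift[of k ?f] z by blast
  moreover have "(exp (- lam) * mu ^ k * P) * exp mu = exp (mu - lam) * mu ^ k * P"
    by (simp add: exp_diff exp_minus field_simps)
  ultimately show ?thesis by simp
qed

lemma poisson_moment:
  fixes q :: "nat pmf"
  assumes S: "finite S" and lam: "0 < lam" and mu: "mu = lam * exp (-1/r)"
  shows "has_bochner_integral (poisson_then_iid lam q)
           (\<lambda>x. exp (- real (fst x) / r) * (\<Prod>i\<in>S. cnt (snd x) i))
           (exp (mu - lam) * mu ^ card S * (\<Prod>i\<in>S. pmf q i))"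
proof (rule has_bochner_integral_nn_integral)
  show "(\<lambda>x. exp (- real (fst x) / r) * (\<Prod>i\<in>S. cnt (snd x) i)) \<in> borel_measurable (measure_pmf (poisson_then_iid lam q))"
    by simp
  show "AE x in measure_pmf (poisson_then_iid lam q). 0 \<le> exp (- real (fst x) / r) * (\<Prod>i\<in>S. cnt (snd x) i)"
    by (simp add: prod_cnt_nonneg)
  have P0: "0 \<le> (\<Prod>i\<in>S. pmf q i)" by (intro prod_nonneg) auto
  have mu0: "0 \<le> mu" using mu lam by simp
  show "0 \<le> exp (mu - lam) * mu ^ card S * (\<Prod>i\<in>S. pmf q i)"
    using P0 mu0 by simp
  define P where "P = (\<Prod>i\<in>S. pmf q i)"
  define k where "k = card S"
  have "(\<integral>\<^sup>+ x. ennreal (exp (- real (fst x) / r) * (\<Prod>i\<in>S. cnt (snd x) i)) \<partial>poisson_then_iid lam q)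
     = (\<integral>\<^sup>+ t. \<integral>\<^sup>+ \<sigma>. ennreal (exp (- real t / r)) * ennreal (\<Prod>i\<in>S. cnt \<sigma> i) \<partial>replicate_pmf t q \<partial>poisson_pmf lam)"
    unfolding poisson_then_iid_def by (simp add: nn_integral_map_pmf ennreal_mult prod_cnt_nonneg)
  also have "\<dots> = (\<integral>\<^sup>+ t. ennreal (exp (- real t / r) * (real (t choose k) * fact k * P)) \<partial>poisson_pmf lam)"
    by (simp add: nn_integral_cmult moment_nn[OF S] P_def k_def ennreal_mult[symmetric] P0)
  also have "\<dots> = (\<Sum>t. ennreal ((lam ^ t / fact t * exp (- lam)) * (exp (- real t / r) * (real (t choose k) * fact k * P))))"
    unfolding nn_integral_measure_pmf nn_integral_count_space_nat
    using lam P0 by (simp add: ennreal_mult[symmetric] P_def)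
  also have "\<dots> = ennreal (exp (mu - lam) * mu ^ k * P)"
    by (rule suminf_ennreal_eq[OF _ series_moment[OF mu]]) (use lam P0 in \<open>auto simp: P_def\<close>)
  finally show "(\<integral>\<^sup>+ x. ennreal (exp (- real (fst x) / r) * (\<Prod>i\<in>S. cnt (snd x) i)) \<partial>poisson_then_iid lam q)
      = ennreal (exp (mu - lam) * mu ^ card S * (\<Prod>i\<in>S. pmf q i))" by (simp add: P_def k_def)
qed



lemma sylvester_det:
  fixes U V :: "real mat"
  assumes U: "U \<in> carrier_mat t n" and V: "V \<in> carrier_mat n t"
  shows "Determinant.det (1\<^sub>m t + U * V) = Determinant.det (1\<^sub>m n + V * U)"
proof -
  define X where "X = four_block_mat (1\<^sub>m t) (- U) V (1\<^sub>m n)"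
  define R where "R = four_block_mat (1\<^sub>m t) U (0\<^sub>m n t) (1\<^sub>m n)"
  have X: "X \<in> carrier_mat (t + n) (t + n)" unfolding X_def using U V by auto
  have R: "R \<in> carrier_mat (t + n) (t + n)" unfolding R_def using U V by auto
  have UV: "U * V \<in> carrier_mat t t" and VU: "V * U \<in> carrier_mat n n" using U V by auto
  have detR: "Determinant.det R = 1"
    unfolding R_def by (subst det_four_block_mat_lower_left_zero[where n=t and m=n]) (use U in auto)
  have "X * R = four_block_mat (1\<^sub>m t) (0\<^sub>m t n) V (V * U + 1\<^sub>m n)"
    unfolding X_def R_def
    by (subst mult_four_block_mat[where ?nr1.0=t and ?n1.0=t and ?n2.0=n and ?nr2.0=n and ?nc1.0=t and ?nc2.0=n]) (use U V in \<open>auto simp: uminus_l_inv_mat\<close>)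
  moreover have "R * X = four_block_mat (1\<^sub>m t + U * V) (0\<^sub>m t n) V (1\<^sub>m n)"
    unfolding X_def R_def
    by (subst mult_four_block_mat[where ?nr1.0=t and ?n1.0=t and ?n2.0=n and ?nr2.0=n and ?nc1.0=t and ?nc2.0=n]) (use U V in \<open>auto simp: uminus_l_inv_mat\<close>)
  ultimately have "Determinant.det X = Determinant.det (V * U + 1\<^sub>m n)" "Determinant.det X = Determinant.det (1\<^sub>m t + U * V)"
    using det_mult[OF X R] det_mult[OF R X] detR
    by (auto simp: det_four_block_mat_upper_right_zero[where n=t and m=n] U V UV VU)
  then show ?thesis using VU by (metis comm_add_mat one_carrier_mat)
qed



lemma det_multiaffine:
  fixes a b :: "nat \<Rightarrow> nat \<Rightarrow> real"
  shows "\<exists>g. \<forall>x. Determinant.det (Matrix.mat n n (\<lambda>(i,j). a i j + b i j * x j))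
           = (\<Sum>X\<in>Pow {0..<n}. g X * (\<Prod>j\<in>{0..<n}-X. x j))"
proof -
  define c where "c p X = signof p * (\<Prod>s\<in>X. a (inv_into UNIV p s) s) * (\<Prod>s\<in>{0..<n}-X. b (inv_into UNIV p s) s)" for p X
  define g where "g X = (\<Sum>p\<in>{p. p permutes {0..<n}}. c p X)" for X
  show ?thesis
  proof (intro exI allI)
    fix x :: "nat \<Rightarrow> real"
    let ?M = "Matrix.mat n n (\<lambda>(i,j). a i j + b i j * x j)"
    have tm: "signof p * (\<Prod>i = 0..<n. ?M $$ (i, p i)) = (\<Sum>X\<in>Pow {0..<n}. c p X * (\<Prod>j\<in>{0..<n}-X. x j))"
      if p: "p permutes {0..<n}" for p
    proof -
      have pi: "i < n \<Longrightarrow> p i < n" for i using p by (simp add: permutes_in_image)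
      have "(\<Prod>i = 0..<n. ?M $$ (i, p i)) = (\<Prod>i\<in>{0..<n}. (\<lambda>u i. a i u + b i u * x u) (p i) i)"
        by (intro prod.cong) (auto simp: pi)
      also have "\<dots> = (\<Prod>s\<in>{0..<n}. a (inv_into UNIV p s) s + b (inv_into UNIV p s) s * x s)"
        by (rule prod.permutes_inv[OF p])
      also have "\<dots> = (\<Sum>X\<in>Pow {0..<n}. (\<Prod>s\<in>X. a (inv_into UNIV p s) s) * (\<Prod>s\<in>{0..<n}-X. b (inv_into UNIV p s) s * x s))"
        by (rule prod_add) simp
      finally show ?thesis
        unfolding c_def by (simp add: sum_distrib_left prod.distrib mult_ac)
    qed
    have "Determinant.det ?M = (\<Sum>p\<in>{p. p permutes {0..<n}}. signof p * (\<Prod>i = 0..<n. ?M $$ (i, p i)))"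
      by (rule det_def') simp
    also have "\<dots> = (\<Sum>p\<in>{p. p permutes {0..<n}}. \<Sum>X\<in>Pow {0..<n}. c p X * (\<Prod>j\<in>{0..<n}-X. x j))"
      by (rule sum.cong[OF refl], rule tm) simp
    also have "\<dots> = (\<Sum>X\<in>Pow {0..<n}. \<Sum>p\<in>{p. p permutes {0..<n}}. c p X * (\<Prod>j\<in>{0..<n}-X. x j))"
      by (rule sum.swap)
    also have "\<dots> = (\<Sum>X\<in>Pow {0..<n}. g X * (\<Prod>j\<in>{0..<n}-X. x j))"
      unfolding g_def by (simp add: sum_distrib_right)
    finally show "Determinant.det ?M = (\<Sum>X\<in>Pow {0..<n}. g X * (\<Prod>j\<in>{0..<n}-X. x j))" .
  qed
qed



lemma sqrt_prod_helper:
  assumes "0 < r" "0 < x" "0 < y"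
  shows "sqrt (r * x) * sqrt (r * y) = r * sqrt (x * y)"
proof -
  have "sqrt (r * x) * sqrt (r * y) = sqrt (r * r) * sqrt (x * y)"
    by (simp only: real_sqrt_mult[symmetric] ac_simps)
  then show ?thesis using assms by simp
qed

lemma E1:
  fixes L :: "real mat" and l :: "nat \<Rightarrow> real"
  assumes L: "L \<in> carrier_mat n n" and len: "length \<sigma> = t" and sig: "\<forall>a<t. \<sigma> ! a < n"
    and lpos: "\<forall>j<n. 0 < l j" and r: "0 < r"
  defines "P \<equiv> Matrix.mat t n (\<lambda>(a,j). if \<sigma> ! a = j then 1 / sqrt (r * l j) else 0)"
  shows "\<alpha> \<cdot>\<^sub>m L_tilde L l r \<sigma> = P * (\<alpha> \<cdot>\<^sub>m (L * transpose_mat P))"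
proof (rule eq_matI)
  show "dim_row (\<alpha> \<cdot>\<^sub>m L_tilde L l r \<sigma>) = dim_row (P * (\<alpha> \<cdot>\<^sub>m (L * transpose_mat P)))"
    by (simp add: L_tilde_def P_def len)
  show "dim_col (\<alpha> \<cdot>\<^sub>m L_tilde L l r \<sigma>) = dim_col (P * (\<alpha> \<cdot>\<^sub>m (L * transpose_mat P)))"
    by (simp add: L_tilde_def P_def len)
  fix a b assume a: "a < dim_row (P * (\<alpha> \<cdot>\<^sub>m (L * transpose_mat P)))" and b: "b < dim_col (P * (\<alpha> \<cdot>\<^sub>m (L * transpose_mat P)))"
  then have a: "a < t" and b: "b < t" by (auto simp: P_def)
  have inner: "(L * transpose_mat P) $$ (j, b) = L $$ (j, \<sigma> ! b) / sqrt (r * l (\<sigma> ! b))" if j: "j < n" for j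
  proof -
    have "(L * transpose_mat P) $$ (j, b) = (\<Sum>k\<in>{0..<n}. L $$ (j, k) * (if \<sigma> ! b = k then 1 / sqrt (r * l k) else 0))"
      using L j b by (simp add: P_def scalar_prod_def)
    also have "\<dots> = (\<Sum>k\<in>{0..<n}. if \<sigma> ! b = k then L $$ (j, k) / sqrt (r * l k) else 0)"
      by (intro sum.cong) auto
    also have "\<dots> = L $$ (j, \<sigma> ! b) / sqrt (r * l (\<sigma> ! b))"
      using sig b by (simp add: sum.delta)
    finally show ?thesis .
  qed
  have "(P * (\<alpha> \<cdot>\<^sub>m (L * transpose_mat P))) $$ (a, b)
      = (\<Sum>j\<in>{0..<n}. (if \<sigma> ! a = j then 1 / sqrt (r * l j) else 0) * (\<alpha> * (L * transpose_mat P) $$ (j, b)))"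
    using L a b by (simp add: P_def scalar_prod_def)
  also have "\<dots> = (\<Sum>j\<in>{0..<n}. if \<sigma> ! a = j then \<alpha> * (L * transpose_mat P) $$ (j, b) / sqrt (r * l j) else 0)"
    by (intro sum.cong) auto
  also have "\<dots> = \<alpha> * (L * transpose_mat P) $$ (\<sigma> ! a, b) / sqrt (r * l (\<sigma> ! a))"
    using sig a by (simp add: sum.delta)
  also have "\<dots> = \<alpha> * L $$ (\<sigma> ! a, \<sigma> ! b) / (sqrt (r * l (\<sigma> ! a)) * sqrt (r * l (\<sigma> ! b)))"
    using inner[of "\<sigma> ! a"] sig a by simp
  also have "\<dots> = (\<alpha> \<cdot>\<^sub>m L_tilde L l r \<sigma>) $$ (a, b)"
    using a b len sig lpos r by (simp add: L_tilde_def sqrt_prod_helper)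
  finally show "(\<alpha> \<cdot>\<^sub>m L_tilde L l r \<sigma>) $$ (a, b) = (P * (\<alpha> \<cdot>\<^sub>m (L * transpose_mat P))) $$ (a, b)" by simp
qed

lemma E2:
  fixes L :: "real mat" and l :: "nat \<Rightarrow> real"
  assumes L: "L \<in> carrier_mat n n" and len: "length \<sigma> = t" and sig: "\<forall>a<t. \<sigma> ! a < n"
    and lpos: "\<forall>j<n. 0 < l j" and r: "0 < r"
  defines "P \<equiv> Matrix.mat t n (\<lambda>(a,j). if \<sigma> ! a = j then 1 / sqrt (r * l j) else 0)"
  shows "1\<^sub>m n + (\<alpha> \<cdot>\<^sub>m (L * transpose_mat P)) * P
       = Matrix.mat n n (\<lambda>(i,j). (if i = j then 1 else 0) + (\<alpha> * L $$ (i, j) / (r * l j)) * cnt \<sigma> j)"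
proof (rule eq_matI)
  fix i j assume i: "i < dim_row (Matrix.mat n n (\<lambda>(i,j). (if i = j then 1 else 0) + (\<alpha> * L $$ (i, j) / (r * l j)) * cnt \<sigma> j))"
    and j: "j < dim_col (Matrix.mat n n (\<lambda>(i,j). (if i = j then 1 else 0) + (\<alpha> * L $$ (i, j) / (r * l j)) * cnt \<sigma> j))"
  then have i: "i < n" and j: "j < n" by auto
  have inner: "(L * transpose_mat P) $$ (i, a) = L $$ (i, \<sigma> ! a) / sqrt (r * l (\<sigma> ! a))" if a: "a < t" for a
  proof -
    have "(L * transpose_mat P) $$ (i, a) = (\<Sum>k\<in>{0..<n}. L $$ (i, k) * (if \<sigma> ! a = k then 1 / sqrt (r * l k) else 0))"
      using L i a by (simp add: P_def scalar_prod_def)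
    also have "\<dots> = (\<Sum>k\<in>{0..<n}. if \<sigma> ! a = k then L $$ (i, k) / sqrt (r * l k) else 0)"
      by (intro sum.cong) auto
    also have "\<dots> = L $$ (i, \<sigma> ! a) / sqrt (r * l (\<sigma> ! a))"
      using sig a by (simp add: sum.delta)
    finally show ?thesis .
  qed
  have "((\<alpha> \<cdot>\<^sub>m (L * transpose_mat P)) * P) $$ (i, j)
      = (\<Sum>a\<in>{0..<t}. (\<alpha> * (L * transpose_mat P) $$ (i, a)) * (if \<sigma> ! a = j then 1 / sqrt (r * l j) else 0))"
    using L i j by (simp add: P_def scalar_prod_def)
  also have "\<dots> = (\<Sum>a\<in>{0..<t}. (\<alpha> * L $$ (i, j) / (r * l j)) * (if \<sigma> ! a = j then 1 else 0))"
  proof (intro sum.cong refl)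
    fix a assume "a \<in> {0..<t}"
    then have a: "a < t" by simp
    have lj: "0 < l j" using lpos j by simp
    have "sqrt (r * l j) * sqrt (r * l j) = r * l j" using r lj by simp
    then show "(\<alpha> * (L * transpose_mat P) $$ (i, a)) * (if \<sigma> ! a = j then 1 / sqrt (r * l j) else 0)
        = (\<alpha> * L $$ (i, j) / (r * l j)) * (if \<sigma> ! a = j then 1 else 0)"
      using inner[OF a] by (auto simp: field_simps)
  qed
  also have "\<dots> = (\<alpha> * L $$ (i, j) / (r * l j)) * cnt \<sigma> j"
    unfolding cnt_def len by (simp add: sum_distrib_left atLeast0LessThan)
  finally show "(1\<^sub>m n + (\<alpha> \<cdot>\<^sub>m (L * transpose_mat P)) * P) $$ (i, j)
      = Matrix.mat n n (\<lambda>(i,j). (if i = j then 1 else 0) + (\<alpha> * L $$ (i, j) / (r * l j)) * cnt \<sigma> j) $$ (i, j)"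
    using i j L by (simp add: P_def)
qed (use L in \<open>auto simp: P_def\<close>)



theorem mainTheorem7:
  fixes n :: nat and L :: "real mat" and D :: "nat list" and w :: "real list"
    and \<alpha> r :: real
  assumes n_pos: "n \<ge> 1"
    and L_psd: "psd_mat n L"
    and D_range: "\<forall>j \<in> set D. j < n"
    and w_len: "length w = length D"
    and w_pos: "\<forall>x \<in> set w. 0 < x"
    and alpha_pos: "\<alpha> > 0"
    and r_ge: "r \<ge> 1"
    and l_pos: "\<forall>i < n. approx_marginal L D w \<alpha> i > 0"
  defines "l \<equiv> approx_marginal L D w \<alpha>"
    and "Lh \<equiv> L_hat L D w"
    and "s \<equiv> d_eff (\<alpha> \<cdot>\<^sub>m L_hat L D w)"
    and "d \<equiv> (\<Sum>i < n. approx_marginal L D w \<alpha> i)"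
  shows "measure_pmf.expectation
           (poisson_then_iid (r * exp (1 / r) * d)
              (pmf_of_list (map (\<lambda>i. (i, l i / d)) [0..<n])))
           (\<lambda>(t, \<sigma>). exp s * Determinant.det (1\<^sub>m t + \<alpha> \<cdot>\<^sub>m L_tilde L l r \<sigma>)
                       / (exp (real t / r) * Determinant.det (1\<^sub>m (length D) + \<alpha> \<cdot>\<^sub>m Lh)))
         = exp (s + r * d - r * exp (1 / r) * d)
             * Determinant.det (1\<^sub>m n + \<alpha> \<cdot>\<^sub>m L) / Determinant.det (1\<^sub>m (length D) + \<alpha> \<cdot>\<^sub>m Lh)"
proof -
  have r0: "0 < r" using r_ge by simp
  have Lc: "L \<in> carrier_mat n n" using L_psd unfolding psd_mat_def by simp
  have lpos: "\<forall>j<n. 0 < l j" using l_pos unfolding l_def by simp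
  have d_eq: "d = (\<Sum>i<n. l i)" unfolding d_def l_def by simp
  have dpos: "0 < d" unfolding d_eq using n_pos lpos by (intro sum_pos) (auto simp: lessThan_empty_iff)
  define A where "A = {0..<n}"
  define xs where "xs = map (\<lambda>i. (i, l i / d)) [0..<n]"
  define q where "q = pmf_of_list xs"
  have wf: "pmf_of_list_wf xs"
  proof (rule pmf_of_list_wfI)
    show "x \<in> set (map snd xs) \<Longrightarrow> 0 \<le> x" for x
      using lpos dpos unfolding xs_def by (auto intro: less_imp_le)
    have "sum_list (map snd xs) = (\<Sum>i\<in>{0..<n}. l i / d)"
      unfolding xs_def by (simp add: interv_sum_list_conv_sum_set_nat o_def)
    also have "\<dots> = 1" using dpos unfolding d_eq by (simp add: sum_divide_distrib[symmetric] atLeast0LessThan)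
    finally show "sum_list (map snd xs) = 1" .
  qed
  have pmfq: "pmf q i = l i / d" if i: "i < n" for i
  proof -
    have "pmf q i = sum_list (map snd (filter (\<lambda>z. fst z = i) xs))"
      unfolding q_def using wf by (rule pmf_pmf_of_list)
    also have "filter (\<lambda>z. fst z = i) xs = map (\<lambda>i. (i, l i / d)) (filter (\<lambda>j. j = i) [0..<n])"
      unfolding xs_def by (simp add: filter_map o_def)
    also have "filter (\<lambda>j. j = i) [0..<n] = [i]"
    proof -
      have "distinct (filter (\<lambda>j. j = i) [0..<n])" by simp
      moreover have "set (filter (\<lambda>j. j = i) [0..<n]) = {i}" using i by auto
      ultimately show ?thesis
        by (metis distinct.simps(2) distinct_singleton empty_set insert_absorb insert_ident
            insert_not_empty list.exhaust list.set_intros(1) list.simps(15) singletonD)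
    qed
    finally show ?thesis by simp
  qed
  have setq: "set_pmf q \<subseteq> A"
    using set_pmf_of_list[OF wf] unfolding q_def A_def xs_def by auto
  define lam where "lam = r * exp (1 / r) * d"
  define mu where "mu = lam * exp (-1/r)"
  have mu_eq: "mu = r * d" unfolding mu_def lam_def by (simp add: exp_minus field_simps)
  have lam0: "0 < lam" unfolding lam_def using r0 dpos by simp
  define a where "a = (\<lambda>(i::nat) (j::nat). if i = j then 1 else (0::real))"
  define b where "b = (\<lambda>i j. \<alpha> * L $$ (i, j) / (r * l j))"
  obtain g where g: "\<And>x. Determinant.det (Matrix.mat n n (\<lambda>(i,j). a i j + b i j * x j))
           = (\<Sum>X\<in>Pow A. g X * (\<Prod>j\<in>A-X. x j))"
    using det_multiaffine[of n a b] unfolding A_def by blast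
  define K where "K = exp s / Determinant.det (1\<^sub>m (length D) + \<alpha> \<cdot>\<^sub>m Lh)"
  define f where "f X x = exp (- real (fst x) / r) * (\<Prod>j\<in>A-X. cnt (snd x) j)" for X and x :: "nat \<times> nat list"
  define h where "h = (\<lambda>(t, \<sigma>). exp s * Determinant.det (1\<^sub>m t + \<alpha> \<cdot>\<^sub>m L_tilde L l r \<sigma>)
                       / (exp (real t / r) * Determinant.det (1\<^sub>m (length D) + \<alpha> \<cdot>\<^sub>m Lh)))"
  have hb: "has_bochner_integral (poisson_then_iid lam q) (\<lambda>x. \<Sum>X\<in>Pow A. K * g X * f X x)
      (\<Sum>X\<in>Pow A. K * g X * (exp (mu - lam) * mu ^ card (A - X) * (\<Prod>j\<in>A-X. pmf q j)))"
    unfolding f_def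
    by (intro has_bochner_integral_sum has_bochner_integral_mult_right poisson_moment lam0 mu_def)
       (simp add: A_def)
  have ae: "AE x in poisson_then_iid lam q. h x = (\<Sum>X\<in>Pow A. K * g X * f X x)"
    unfolding AE_measure_pmf_iff
  proof
    fix x assume x: "x \<in> set_pmf (poisson_then_iid lam q)"
    obtain t \<sigma> where xe: "x = (t, \<sigma>)" by (cases x)
    have len: "length \<sigma> = t" and sset: "set \<sigma> \<subseteq> set_pmf q"
      using x unfolding xe poisson_then_iid_def by (auto simp: set_replicate_pmf)
    have sig: "\<forall>a<t. \<sigma> ! a < n" using sset setq len unfolding A_def by (auto dest!: nth_mem)
    define P where "P = Matrix.mat t n (\<lambda>(a,j). if \<sigma> ! a = j then 1 / sqrt (r * l j) else 0)"
    define V where "V = \<alpha> \<cdot>\<^sub>m (L * transpose_mat P)"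
    have Pc: "P \<in> carrier_mat t n" unfolding P_def by simp
    have Vc: "V \<in> carrier_mat n t" unfolding V_def using Lc Pc by simp
    have "Determinant.det (1\<^sub>m t + \<alpha> \<cdot>\<^sub>m L_tilde L l r \<sigma>) = Determinant.det (1\<^sub>m t + P * V)"
      using E1[OF Lc len sig lpos r0, of \<alpha>] unfolding P_def V_def by simp
    also have "\<dots> = Determinant.det (1\<^sub>m n + V * P)" by (rule sylvester_det[OF Pc Vc])
    also have "1\<^sub>m n + V * P = Matrix.mat n n (\<lambda>(i,j). a i j + b i j * cnt \<sigma> j)"
      using E2[OF Lc len sig lpos r0, of \<alpha>] unfolding P_def V_def a_def b_def by simp
    also have "Determinant.det \<dots> = (\<Sum>X\<in>Pow A. g X * (\<Prod>j\<in>A-X. cnt \<sigma> j))" by (rule g)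
    finally have dt: "Determinant.det (1\<^sub>m t + \<alpha> \<cdot>\<^sub>m L_tilde L l r \<sigma>) = (\<Sum>X\<in>Pow A. g X * (\<Prod>j\<in>A-X. cnt \<sigma> j))" .
    have ee: "exp (- real t / r) = 1 / exp (real t / r)" by (simp add: exp_minus field_simps)
    have ee2: "exp (real t / r) * exp (- (real t / r)) = 1" by (simp add: exp_minus)
    let ?H = "Determinant.det (1\<^sub>m (length D) + \<alpha> \<cdot>\<^sub>m Lh)"
    have "h x = (\<Sum>X\<in>Pow A. exp s * (g X * (\<Prod>j\<in>A-X. cnt \<sigma> j)) / (exp (real t / r) * ?H))"
      unfolding h_def xe using dt by (simp add: sum_distrib_left sum_divide_distrib)
    also have "\<dots> = (\<Sum>X\<in>Pow A. K * g X * f X x)"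
      by (intro sum.cong refl) (cases "?H = 0", simp_all add: K_def f_def xe ee ee2 field_simps)
    finally show "h x = (\<Sum>X\<in>Pow A. K * g X * f X x)" .
  qed
  have hb2: "has_bochner_integral (poisson_then_iid lam q) h
      (\<Sum>X\<in>Pow A. K * g X * (exp (mu - lam) * mu ^ card (A - X) * (\<Prod>j\<in>A-X. pmf q j)))"
    using hb by (subst has_bochner_integral_cong_AE[OF _ _ ae]) auto
  have val: "(\<Sum>X\<in>Pow A. K * g X * (exp (mu - lam) * mu ^ card (A - X) * (\<Prod>j\<in>A-X. pmf q j)))
      = K * exp (mu - lam) * Determinant.det (1\<^sub>m n + \<alpha> \<cdot>\<^sub>m L)"
  proof -
    have pr: "mu ^ card (A - X) * (\<Prod>j\<in>A-X. pmf q j) = (\<Prod>j\<in>A-X. r * l j)" if "X \<in> Pow A" for X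
    proof -
      have "mu ^ card (A - X) * (\<Prod>j\<in>A-X. pmf q j) = (\<Prod>j\<in>A-X. mu * pmf q j)"
        by (simp add: prod.distrib)
      also have "\<dots> = (\<Prod>j\<in>A-X. r * l j)"
        using dpos by (intro prod.cong refl) (auto simp: A_def pmfq mu_eq)
      finally show ?thesis .
    qed
    have "(\<Sum>X\<in>Pow A. K * g X * (exp (mu - lam) * mu ^ card (A - X) * (\<Prod>j\<in>A-X. pmf q j)))
        = K * exp (mu - lam) * (\<Sum>X\<in>Pow A. g X * (\<Prod>j\<in>A-X. r * l j))"
      unfolding sum_distrib_left
    proof (intro sum.cong refl)
      fix X assume X: "X \<in> Pow A"
      have "K * g X * (exp (mu - lam) * mu ^ card (A - X) * (\<Prod>j\<in>A-X. pmf q j))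
          = K * exp (mu - lam) * (g X * (mu ^ card (A - X) * (\<Prod>j\<in>A-X. pmf q j)))"
        by (simp only: mult_ac)
      then show "K * g X * (exp (mu - lam) * mu ^ card (A - X) * (\<Prod>j\<in>A-X. pmf q j))
          = K * exp (mu - lam) * (g X * (\<Prod>j\<in>A-X. r * l j))"
        by (simp only: pr[OF X])
    qed
    also have "(\<Sum>X\<in>Pow A. g X * (\<Prod>j\<in>A-X. r * l j)) = Determinant.det (Matrix.mat n n (\<lambda>(i,j). a i j + b i j * (r * l j)))"
      by (rule g[symmetric])
    also have "Matrix.mat n n (\<lambda>(i,j). a i j + b i j * (r * l j)) = 1\<^sub>m n + \<alpha> \<cdot>\<^sub>m L"
    proof (rule eq_matI)
      fix i j assume "i < dim_row (1\<^sub>m n + \<alpha> \<cdot>\<^sub>m L)" "j < dim_col (1\<^sub>m n + \<alpha> \<cdot>\<^sub>m L)"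
      then have i: "i < n" and j: "j < n" using Lc by auto
      have "0 < l j" using lpos j by simp
      then show "Matrix.mat n n (\<lambda>(i,j). a i j + b i j * (r * l j)) $$ (i, j) = (1\<^sub>m n + \<alpha> \<cdot>\<^sub>m L) $$ (i, j)"
        using i j Lc r0 by (simp add: a_def b_def)
    qed (use Lc in auto)
    finally show ?thesis .
  qed
  have "measure_pmf.expectation (poisson_then_iid lam q) h = K * exp (mu - lam) * Determinant.det (1\<^sub>m n + \<alpha> \<cdot>\<^sub>m L)"
    using has_bochner_integral_integral_eq[OF hb2] val by simp
  moreover have "exp (s + r * d - r * exp (1 / r) * d) * Determinant.det (1\<^sub>m n + \<alpha> \<cdot>\<^sub>m L) / Determinant.det (1\<^sub>m (length D) + \<alpha> \<cdot>\<^sub>m Lh)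
      = K * exp (mu - lam) * Determinant.det (1\<^sub>m n + \<alpha> \<cdot>\<^sub>m L)"
    unfolding K_def mu_eq lam_def by (simp add: exp_add exp_diff field_simps)
  ultimately show ?thesis unfolding h_def lam_def q_def xs_def by simp
qed

end
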